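(* For every positive integer $N$ and every admissible index $\boldsymbol{k}=(k_1,\dots,k_r)$, \[ \zeta^\diamondsuit_N(\boldsymbol{k})=\sum_{\substack{0<n_{i,1}\le\cdots\le n_{i,k_i}<N\ (i\in[r])\\ n_{i,k_i}\le n_{i+1,1}\ (i\in[r]^1_{\boldsymbol{k}})\\ n_{i,k_i}<n_{i+1,1}\ (i\in[r-1]\setminus[r]^1_{\boldsymbol{k}})}}\ \prod_{i\in[r]}\frac1{(N-n_{i,1})\,n_{i,2}\cdots n_{i,k_i}}. \]
   Context: $[n]=\{1,\dots,n\}$. An admissible index is a nonempty tuple of positive integers with last entry $\ge2$. For admissible $\boldsymbol{k}=(k_1,\dots,k_r)$: $[r]^1_{\boldsymbol{k}}=\{i\in[r]:k_i=1\}$ (note $r\notin[r]^1_{\boldsymbol{k}}$), $S_{r,N}(A)=\{(n_1,\dots,n_r)\in[N-1]^r: n_i\le n_{i+1}\ (i\in A),\ n_i<n_{i+1}\ (i\in[r-1]\setminus A)\}$, and $\zeta^\diamondsuit_N(\boldsymbol{k})=\sum_{A\subset[r]^1_{\boldsymbol{k}}}\sum_{(n_1,\dots,n_r)\in S_{r,N}(A)}\prod_{i\in A}(N-n_i)^{-1}\prod_{i\in[r]\setminus A}n_i^{-k_i}$. Empty products equal $1$. *)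

theory Defs
  imports Complex_Main "HOL-Library.FuncSet"
begin

text \<open>Indices are lists ks; entry i (1-based, i in [r]) is ks ! (i - 1).\<close>

definition admissible :: "nat list \<Rightarrow> bool" where
  "admissible ks \<longleftrightarrow> ks \<noteq> [] \<and> (\<forall>x\<in>set ks. x > 0) \<and> last ks \<ge> 2"

definition kk :: "nat list \<Rightarrow> nat \<Rightarrow> nat" where
  "kk ks i = ks ! (i - 1)"

definition ones_set :: "nat list \<Rightarrow> nat set" where
  "ones_set ks = {i \<in> {1..length ks}. kk ks i = 1}"

definition S_set :: "nat \<Rightarrow> nat \<Rightarrow> nat set \<Rightarrow> (nat \<Rightarrow> nat) set" where
  "S_set r N A = {n \<in> PiE {1..r} (\<lambda>_. {1..N-1}).
      (\<forall>i\<in>A. n i \<le> n (i+1)) \<and> (\<forall>i\<in>{1..r-1} - A. n i < n (i+1))}"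

definition zeta_diamond :: "nat \<Rightarrow> nat list \<Rightarrow> real" where
  "zeta_diamond N ks = (let r = length ks in
     \<Sum>A\<in>Pow (ones_set ks). \<Sum>n\<in>S_set r N A.
       (\<Prod>i\<in>A. 1 / (real N - real (n i))) *
       (\<Prod>i\<in>{1..r} - A. 1 / real (n i) ^ kk ks i))"

definition T_set :: "nat \<Rightarrow> nat list \<Rightarrow> (nat \<times> nat \<Rightarrow> nat) set" where
  "T_set N ks = (let r = length ks in
     {n \<in> PiE (SIGMA i:{1..r}. {1..kk ks i}) (\<lambda>_. {1..N-1}).
       (\<forall>i\<in>{1..r}. \<forall>j\<in>{1..<kk ks i}. n (i, j) \<le> n (i, j+1)) \<and>
       (\<forall>i\<in>ones_set ks. n (i, kk ks i) \<le> n (i+1, 1)) \<and>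
       (\<forall>i\<in>{1..r-1} - ones_set ks. n (i, kk ks i) < n (i+1, 1))})"

end

theory Submission
  imports Defs
begin


definition cm :: "nat \<Rightarrow> nat \<Rightarrow> nat \<Rightarrow> real" where
  "cm N a b = fact b * fact (N - 1 - a) / (fact (b - a) * fact (N - 1))"

lemma G2:
  assumes "a \<le> b"
  shows "cm N a (Suc b) * real (Suc b - a) = cm N a b * real (Suc b)"
proof -
  have e: "Suc b - a = Suc (b - a)" using assms by simp
  have f1: "(fact (Suc b)::real) = real (Suc b) * fact b" by simp
  have f2: "(fact (Suc b - a)::real) = real (Suc b - a) * fact (b - a)" unfolding e by simp
  have p: "(fact (b-a)::real) > 0" "(fact (N-1)::real) > 0" "real (Suc b - a) > 0" using e by auto
  have gen: "\<And>s1 s2 x y K L::real. s2 \<noteq> 0 \<Longrightarrow> s1 * x * K / (s2 * y * L) * s2 = x * K / (y * L) * s1"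
    by (simp add: field_simps)
  show ?thesis unfolding cm_def f1 f2 using p by (intro gen) simp
qed

lemma G1:
  assumes "a < b" "b \<le> N - 1"
  shows "cm N (Suc a) b * real (N - 1 - a) = cm N a b * real (b - a)"
proof -
  have e1: "N - 1 - a = Suc (N - 1 - Suc a)" using assms by simp
  have e2: "b - a = Suc (b - Suc a)" using assms by simp
  have f1: "(fact (N - 1 - a)::real) = real (N - 1 - a) * fact (N - 1 - Suc a)"
    by (metis e1 fact_Suc of_nat_fact)
  have f2: "(fact (b - a)::real) = real (b - a) * fact (b - Suc a)"
    by (metis e2 fact_Suc of_nat_fact)
  have p: "(fact (b - Suc a)::real) > 0" "(fact (N-1)::real) > 0" "real (b - a) > 0" using e2 by auto
  have gen: "\<And>s t x K F L::real. t \<noteq> 0 \<Longrightarrow> x * K / (F * L) * s = x * (s * K) / (t * F * L) * t"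
    by (simp add: field_simps)
  show ?thesis unfolding cm_def f1 f2 using p by (intro gen) simp
qed

lemma F1:
  assumes "1 \<le> a" "a \<le> b"
  shows "(\<Sum>c\<in>{a..b}. cm N a c / real c) = cm N a b / real a"
  using assms(2)
proof (induction b rule: dec_induct)
  case base
  then show ?case by simp
next
  case (step b)
  have "(\<Sum>c\<in>{a..Suc b}. cm N a c / real c) = cm N a b / real a + cm N a (Suc b) / real (Suc b)"
    using step by (simp add: atLeastAtMostSuc_conv)
  also have "\<dots> = cm N a (Suc b) / real a"
  proof -
    have g: "cm N a (Suc b) * real (Suc b - a) = cm N a b * real (Suc b)" using G2 step by simp
    have "real (Suc b - a) = real (Suc b) - real a" using step by simp
    with g have "cm N a (Suc b) * (real (Suc b) - real a) = cm N a b * real (Suc b)" by simp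
    moreover have "real a > 0" "real (Suc b) > 0" using assms by auto
    moreover have gen: "\<And>x y A B::real. A > 0 \<Longrightarrow> B > 0 \<Longrightarrow> y * (B - A) = x * B \<Longrightarrow> x / A + y / B = y / A"
    proof -
      fix x y A B :: real assume h: "A > 0" "B > 0" "y * (B - A) = x * B"
      then have e: "y * B = x * B + y * A" by (simp add: algebra_simps)
      have "x / A + y / B = (x * B + y * A) / (A * B)" using h by (simp add: add_frac_eq)
      also have "\<dots> = (y * B) / (A * B)" using e by simp
      also have "\<dots> = y / A" using h by simp
      finally show "x / A + y / B = y / A" .
    qed
    ultimately show ?thesis by (intro gen) auto
  qed
  finally show ?case .
qed

lemma F2:
  assumes "1 \<le> a" "a \<le> b" "b \<le> N - 1"
  shows "(\<Sum>c\<in>{a..b}. cm N c b) = cm N a b * (real N - real a) / (real N - real b)"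
  using assms
proof (induction "b - a" arbitrary: a)
  case 0
  then have "a = b" by simp
  moreover have "real N - real b > 0" using 0 by auto
  ultimately show ?case by simp
next
  case (Suc d)
  then have ab: "a < b" by simp
  have "{a..b} = insert a {Suc a..b}" using ab by auto
  then have "(\<Sum>c\<in>{a..b}. cm N c b) = cm N a b + (\<Sum>c\<in>{Suc a..b}. cm N c b)" by simp
  also have "(\<Sum>c\<in>{Suc a..b}. cm N c b) = cm N (Suc a) b * (real N - real (Suc a)) / (real N - real b)"
    using Suc by simp
  also have "cm N (Suc a) b * (real N - real (Suc a)) = cm N a b * (real b - real a)"
  proof -
    have "real (N - 1 - a) = real N - real (Suc a)" "real (b - a) = real b - real a" using Suc ab by auto
    then show ?thesis using G1[OF ab Suc(5)] by simp
  qed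
  finally have e: "(\<Sum>c\<in>{a..b}. cm N c b) = cm N a b + cm N a b * (real b - real a) / (real N - real b)" .
  have p: "real N - real b > 0" using Suc by auto
  show ?case unfolding e using p by (simp add: field_simps)
qed

lemma F4a:
  assumes "1 \<le> b" "b \<le> N - 1"
  shows "cm N 1 b = real b / real (N - 1)"
proof -
  have e1: "b = Suc (b - 1)" and e2: "N - 1 = Suc (N - 1 - 1)" using assms by auto
  have f1: "(fact b::real) = real b * fact (b - 1)" by (metis e1 fact_Suc of_nat_fact)
  have f2: "(fact (N-1)::real) = real (N - 1) * fact (N - 1 - 1)" by (metis e2 fact_Suc of_nat_fact)
  have p: "(fact (b - 1)::real) > 0" "(fact (N - 1 - 1)::real) > 0" "real (N - 1) > 0" using assms by auto
  show ?thesis unfolding cm_def f1 f2 using p by (simp add: field_simps)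
qed

lemma F4b:
  assumes "a \<le> N - 1"
  shows "cm N a (N - 1) = 1"
  unfolding cm_def by simp

definition Uo :: "nat \<Rightarrow> (nat \<Rightarrow> real) \<Rightarrow> nat \<Rightarrow> real" where
  "Uo N f x = (\<Sum>y\<in>{x<..N-1}. f y)"
definition Uc :: "nat \<Rightarrow> (nat \<Rightarrow> real) \<Rightarrow> nat \<Rightarrow> real" where
  "Uc N f x = (\<Sum>y\<in>{x..N-1}. f y)"
definition Po :: "(nat \<Rightarrow> real) \<Rightarrow> nat \<Rightarrow> real" where
  "Po f x = f x / real x"
definition Qo :: "nat \<Rightarrow> (nat \<Rightarrow> real) \<Rightarrow> nat \<Rightarrow> real" where
  "Qo N f x = f x / (real N - real x)"
definition Zo :: "nat \<Rightarrow> (nat \<Rightarrow> real) \<Rightarrow> nat \<Rightarrow> real" where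
  "Zo N f = Po (Uc N f)"
definition Cm :: "nat \<Rightarrow> (nat \<Rightarrow> real) \<Rightarrow> nat \<Rightarrow> real" where
  "Cm N f a = (\<Sum>b\<in>{a..N-1}. cm N a b * f b)"
definition Cs :: "nat \<Rightarrow> (nat \<Rightarrow> real) \<Rightarrow> nat \<Rightarrow> real" where
  "Cs N f a = (\<Sum>b\<in>{a..N-1}. cm N a b * ((real N - real b) / real b) * f b)"
definition Bop :: "nat \<Rightarrow> nat \<Rightarrow> (nat \<Rightarrow> real) \<Rightarrow> nat \<Rightarrow> real" where
  "Bop N k g x = real x / (real N - real x) * (Zo N ^^ (k - 1)) (Po g) x"

lemma tri1:
  fixes a M :: nat shows "(\<Sum>c\<in>{a..M}. \<Sum>b\<in>{c..M}. F c b :: real) = (\<Sum>b\<in>{a..M}. \<Sum>c\<in>{a..b}. F c b)"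
proof -
  have "(\<Sum>c\<in>{a..M}. \<Sum>b\<in>{c..M}. F c b) = (\<Sum>c\<in>{a..M}. \<Sum>b\<in>{y. y \<in> {a..M} \<and> c \<le> y}. F c b)"
    by (intro sum.cong refl set_eqI) auto
  also have "\<dots> = (\<Sum>b\<in>{a..M}. \<Sum>c\<in>{x. x \<in> {a..M} \<and> x \<le> b}. F c b)"
    by (rule sum.swap_restrict) auto
  also have "\<dots> = (\<Sum>b\<in>{a..M}. \<Sum>c\<in>{a..b}. F c b)"
    by (intro sum.cong refl set_eqI) auto
  finally show ?thesis .
qed

lemma tri2:
  fixes a M :: nat shows "(\<Sum>c\<in>{a..M}. \<Sum>b\<in>{c<..M}. F c b :: real) = (\<Sum>b\<in>{a<..M}. \<Sum>c\<in>{a..<b}. F c b)"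
proof -
  have "(\<Sum>c\<in>{a..M}. \<Sum>b\<in>{c<..M}. F c b) = (\<Sum>c\<in>{a..M}. \<Sum>b\<in>{y. y \<in> {a<..M} \<and> c < y}. F c b)"
    by (intro sum.cong refl set_eqI) auto
  also have "\<dots> = (\<Sum>b\<in>{a<..M}. \<Sum>c\<in>{x. x \<in> {a..M} \<and> x < b}. F c b)"
    by (rule sum.swap_restrict) auto
  also have "\<dots> = (\<Sum>b\<in>{a<..M}. \<Sum>c\<in>{a..<b}. F c b)"
    by (intro sum.cong refl set_eqI) auto
  finally show ?thesis .
qed

lemma R2:
  assumes "1 \<le> a" "a \<le> N - 1"
  shows "Cm N (Zo N f) a = Cm N f a / real a"
proof -
  have "Cm N (Zo N f) a = (\<Sum>c\<in>{a..N-1}. \<Sum>b\<in>{c..N-1}. cm N a c / real c * f b)"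
    unfolding Cm_def Zo_def Po_def Uc_def by (simp add: sum_distrib_left sum_divide_distrib)
  also have "\<dots> = (\<Sum>b\<in>{a..N-1}. \<Sum>c\<in>{a..b}. cm N a c / real c * f b)" by (rule tri1)
  also have "\<dots> = (\<Sum>b\<in>{a..N-1}. cm N a b / real a * f b)"
  proof (intro sum.cong refl)
    fix b assume b: "b \<in> {a..N-1}"
    have "(\<Sum>c\<in>{a..b}. cm N a c / real c * f b) = (\<Sum>c\<in>{a..b}. cm N a c / real c) * f b"
      by (simp add: sum_distrib_right)
    then show "(\<Sum>c\<in>{a..b}. cm N a c / real c * f b) = cm N a b / real a * f b"
      using F1[of a b N] assms b by simp
  qed
  also have "\<dots> = Cm N f a / real a"
    unfolding Cm_def by (simp add: sum_divide_distrib)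
  finally show ?thesis .
qed

lemma E3:
  assumes "a < b" "b \<le> N - 1"
  shows "cm N (Suc a) b * (real N - real (Suc a)) / real b = cm N a (b - 1)"
proof -
  have g1: "cm N (Suc a) b * real (N - 1 - a) = cm N a b * real (b - a)" by (rule G1[OF assms])
  have g2: "cm N a (Suc (b-1)) * real (Suc (b-1) - a) = cm N a (b-1) * real (Suc (b-1))"
    by (rule G2) (use assms in auto)
  have e: "Suc (b-1) = b" using assms by auto
  have r: "real (N - 1 - a) = real N - real (Suc a)" using assms by auto
  have bp: "real b > 0" using assms by auto
  from g1 g2 e r have "cm N (Suc a) b * (real N - real (Suc a)) = cm N a (b-1) * real b" by simp
  then show ?thesis using bp by (simp add: field_simps)
qed

lemma R3:
  assumes "1 \<le> a" "a \<le> N - 1"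
  shows "Po (Uo N (Cs N f)) a = Cm N (Po (Uo N f)) a"
proof -
  have "Po (Uo N (Cs N f)) a = (\<Sum>c\<in>{Suc a..N-1}. \<Sum>b\<in>{c..N-1}. cm N c b * ((real N - real b) / real b) * f b) / real a"
    unfolding Po_def Uo_def Cs_def by (simp add: greaterThanAtMost_eq_atLeastAtMost_diff atLeastSucAtMost_greaterThanAtMost)
  also have "\<dots> = (\<Sum>b\<in>{Suc a..N-1}. \<Sum>c\<in>{Suc a..b}. cm N c b * ((real N - real b) / real b) * f b) / real a"
    by (subst tri1) rule
  also have "\<dots> = (\<Sum>b\<in>{Suc a..N-1}. (\<Sum>c\<in>{Suc a..b}. cm N c b * ((real N - real b) / real b) * f b) / real a)"
    by (rule sum_divide_distrib)
  also have "\<dots> = (\<Sum>b\<in>{Suc a..N-1}. cm N a (b - 1) / real a * f b)"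
  proof (intro sum.cong refl)
    fix b assume b: "b \<in> {Suc a..N-1}"
    have "(\<Sum>c\<in>{Suc a..b}. cm N c b * ((real N - real b) / real b) * f b)
        = (\<Sum>c\<in>{Suc a..b}. cm N c b) * ((real N - real b) / real b) * f b"
      by (simp only: sum_distrib_right)
    also have "\<dots> = cm N (Suc a) b * (real N - real (Suc a)) / (real N - real b) * ((real N - real b) / real b) * f b"
      using F2[of "Suc a" b N] b by simp
    also have "\<dots> = cm N (Suc a) b * (real N - real (Suc a)) / real b * f b"
    proof -
      have "real N - real b > 0" using b by auto
      then show ?thesis by simp
    qed
    also have "\<dots> = cm N a (b - 1) * f b" using E3[of a b N] b by simp
    finally show "(\<Sum>c\<in>{Suc a..b}. cm N c b * ((real N - real b) / real b) * f b) / real a = cm N a (b - 1) / real a * f b"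
      by simp
  qed
  also have "\<dots> = (\<Sum>b\<in>{a<..N-1}. \<Sum>c\<in>{a..<b}. cm N a c / real c * f b)"
  proof (intro sum.cong)
    show "{Suc a..N-1} = {a<..N-1}" by auto
    fix b assume b: "b \<in> {a<..N-1}"
    have "{a..<b} = {a..b-1}" using b by auto
    then have "(\<Sum>c\<in>{a..<b}. cm N a c / real c * f b) = (\<Sum>c\<in>{a..b-1}. cm N a c / real c) * f b"
      by (simp add: sum_distrib_right)
    also have "\<dots> = cm N a (b - 1) / real a * f b" proof -
      have "a \<le> b - 1" using b by auto
      then show ?thesis using F1[of a "b-1" N] assms by simp
    qed
    finally show "cm N a (b - 1) / real a * f b = (\<Sum>c\<in>{a..<b}. cm N a c / real c * f b)" by simp
  qed
  also have "\<dots> = (\<Sum>c\<in>{a..N-1}. \<Sum>b\<in>{c<..N-1}. cm N a c / real c * f b)"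
    by (rule tri2[symmetric])
  also have "\<dots> = Cm N (Po (Uo N f)) a"
    unfolding Cm_def Po_def Uo_def by (simp add: sum_distrib_left sum_divide_distrib)
  finally show ?thesis .
qed

lemma R4a:
  assumes "1 \<le> a" "a \<le> N - 1"
  shows "Qo N (Uc N (Cs N f)) a = Cm N (Po f) a"
proof -
  have pa: "real N - real a > 0" using assms by auto
  have "Qo N (Uc N (Cs N f)) a = (\<Sum>c\<in>{a..N-1}. \<Sum>b\<in>{c..N-1}. cm N c b * ((real N - real b) / real b) * f b) / (real N - real a)"
    unfolding Qo_def Uc_def Cs_def by simp
  also have "\<dots> = (\<Sum>b\<in>{a..N-1}. \<Sum>c\<in>{a..b}. cm N c b * ((real N - real b) / real b) * f b) / (real N - real a)"
    by (subst tri1) rule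
  also have "\<dots> = (\<Sum>b\<in>{a..N-1}. (\<Sum>c\<in>{a..b}. cm N c b * ((real N - real b) / real b) * f b) / (real N - real a))"
    by (rule sum_divide_distrib)
  also have "\<dots> = (\<Sum>b\<in>{a..N-1}. cm N a b * (f b / real b))"
  proof (intro sum.cong refl)
    fix b assume b: "b \<in> {a..N-1}"
    have pb: "real N - real b > 0" using b assms by auto
    have "(\<Sum>c\<in>{a..b}. cm N c b * ((real N - real b) / real b) * f b)
        = (\<Sum>c\<in>{a..b}. cm N c b) * ((real N - real b) / real b) * f b"
      by (simp only: sum_distrib_right)
    also have "\<dots> = cm N a b * (real N - real a) / (real N - real b) * ((real N - real b) / real b) * f b"
      using F2[of a b N] b assms by simp
    finally show "(\<Sum>c\<in>{a..b}. cm N c b * ((real N - real b) / real b) * f b) / (real N - real a) = cm N a b * (f b / real b)"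
      using pa pb by simp
  qed
  also have "\<dots> = Cm N (Po f) a" unfolding Cm_def Po_def by simp
  finally show ?thesis .
qed

lemma Cm_cong:
  assumes "\<And>b. b \<in> {a..N-1} \<Longrightarrow> f b = g b"
  shows "Cm N f a = Cm N g a"
  unfolding Cm_def using assms by (intro sum.cong) auto

lemma Cs_cong:
  assumes "\<And>b. b \<in> {a..N-1} \<Longrightarrow> f b = g b"
  shows "Cs N f a = Cs N g a"
  unfolding Cs_def using assms by (intro sum.cong) auto

lemma Cm_add: "Cm N f a + Cm N g a = Cm N (\<lambda>x. f x + g x) a"
  unfolding Cm_def by (simp add: sum.distrib algebra_simps)

lemma R4:
  assumes "1 \<le> a" "a \<le> N - 1"
  shows "Qo N (Uc N (Cs N f)) a + Po (Uo N (Cs N f)) a = Cm N (Po (Uc N f)) a"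
proof -
  have "Qo N (Uc N (Cs N f)) a + Po (Uo N (Cs N f)) a = Cm N (Po f) a + Cm N (Po (Uo N f)) a"
    using R4a[OF assms] R3[OF assms] by simp
  also have "\<dots> = Cm N (\<lambda>x. Po f x + Po (Uo N f) x) a" by (rule Cm_add)
  also have "\<dots> = Cm N (Po (Uc N f)) a"
  proof (rule Cm_cong)
    fix b assume b: "b \<in> {a..N-1}"
    have "{b..N-1} = insert b {b<..N-1}" using b by auto
    then have "Uc N f b = f b + Uo N f b" unfolding Uc_def Uo_def by simp
    then show "Po f b + Po (Uo N f) b = Po (Uc N f) b" unfolding Po_def by (simp add: add_divide_distrib)
  qed
  finally show ?thesis .
qed

lemma Zpow:
  assumes "1 \<le> a" "a \<le> N - 1"
  shows "Cm N ((Zo N ^^ j) h) a = Cm N h a / real a ^ j"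
proof (induction j)
  case 0 then show ?case by simp
next
  case (Suc j)
  have "Cm N ((Zo N ^^ Suc j) h) a = Cm N (Zo N ((Zo N ^^ j) h)) a" by simp
  also have "\<dots> = Cm N ((Zo N ^^ j) h) a / real a" by (rule R2[OF assms])
  finally show ?case using Suc by simp
qed

lemma CsB:
  assumes "1 \<le> a" "a \<le> N - 1"
  shows "Cs N (Bop N k g) a = Cm N ((Zo N ^^ (k - 1)) (Po g)) a"
  unfolding Cs_def Cm_def Bop_def
proof (intro sum.cong refl)
  fix b assume b: "b \<in> {a..N-1}"
  have "real N - real b > 0" "real b > 0" using b assms by auto
  then show "cm N a b * ((real N - real b) / real b) * (real b / (real N - real b) * (Zo N ^^ (k - 1)) (Po g) b) =
         cm N a b * (Zo N ^^ (k - 1)) (Po g) b" by simp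
qed

lemma CmP1:
  assumes "1 \<le> a" "a \<le> N - 1"
  shows "Cm N (Po (\<lambda>_. 1)) a = 1 / real a"
  unfolding Cm_def Po_def using F1[of a "N-1" N] F4b[of a N] assms by simp

lemma Cs_total:
  "(\<Sum>a\<in>{1..N-1}. Cs N g a) = (\<Sum>b\<in>{1..N-1}. g b)"
proof -
  have "(\<Sum>a\<in>{1..N-1}. Cs N g a) = (\<Sum>b\<in>{1..N-1}. \<Sum>a\<in>{1..b}. cm N a b * ((real N - real b) / real b) * g b)"
    unfolding Cs_def by (rule tri1)
  also have "\<dots> = (\<Sum>b\<in>{1..N-1}. g b)"
  proof (intro sum.cong refl)
    fix b assume b: "b \<in> {1..N-1}"
    have pb: "real N - real b > 0" "real b > 0" "real (N - 1) > 0" using b by auto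
    have "(\<Sum>a\<in>{1..b}. cm N a b * ((real N - real b) / real b) * g b) = (\<Sum>a\<in>{1..b}. cm N a b) * ((real N - real b) / real b) * g b"
      by (simp only: sum_distrib_right)
    also have "\<dots> = cm N 1 b * (real N - 1) / (real N - real b) * ((real N - real b) / real b) * g b"
      using F2[of 1 b N] b by simp
    also have "\<dots> = g b" using F4a[of b N] b pb by (simp add: of_nat_diff)
    finally show "(\<Sum>a\<in>{1..b}. cm N a b * ((real N - real b) / real b) * g b) = g b" .
  qed
  finally show ?thesis .
qed

fun vL :: "nat \<Rightarrow> nat list \<Rightarrow> nat \<Rightarrow> real" where
  "vL N [] = (\<lambda>_. 0)"
| "vL N [k] = (\<lambda>x. 1 / real x ^ k)"
| "vL N (k # k' # ks) = (if k = 1 then (\<lambda>x. Qo N (Uc N (vL N (k'#ks))) x + Po (Uo N (vL N (k'#ks))) x)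
     else (\<lambda>x. Uo N (vL N (k'#ks)) x / real x ^ k))"

fun vR :: "nat \<Rightarrow> nat list \<Rightarrow> nat \<Rightarrow> real" where
  "vR N [] = (\<lambda>_. 0)"
| "vR N [k] = Bop N k (\<lambda>_. 1)"
| "vR N (k # k' # ks) = Bop N k (if k = 1 then Uc N (vR N (k'#ks)) else Uo N (vR N (k'#ks)))"

lemma Uo_cong: "(\<And>y. y \<in> {x<..N-1} \<Longrightarrow> f y = g y) \<Longrightarrow> Uo N f x = Uo N g x"
  unfolding Uo_def by (intro sum.cong) auto
lemma Uc_cong: "(\<And>y. y \<in> {x..N-1} \<Longrightarrow> f y = g y) \<Longrightarrow> Uc N f x = Uc N g x"
  unfolding Uc_def by (intro sum.cong) auto

lemma conn:
  assumes "\<forall>k\<in>set ks. k > 0" "ks \<noteq> []"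
  shows "\<forall>a\<in>{1..N-1}. vL N ks a = Cs N (vR N ks) a"
  using assms
proof (induction N ks rule: vL.induct)
  case (1 N) then show ?case by simp
next
  case (2 N k)
  show ?case
  proof
    fix a assume a: "a \<in> {1..N-1}"
    have "Cs N (vR N [k]) a = Cm N (Po (\<lambda>_. 1)) a / real a ^ (k - 1)"
      using CsB[of a N k] Zpow[of a N "k-1"] a by simp
    also have "\<dots> = 1 / real a ^ k" using CmP1[of a N] a 2 
      by (cases k) (auto simp: field_simps)
    finally show "vL N [k] a = Cs N (vR N [k]) a" by simp
  qed
next
  case (3 N k k' ks)
  have IH: "\<forall>a\<in>{1..N-1}. vL N (k'#ks) a = Cs N (vR N (k'#ks)) a" using 3 by (cases "k = 1") simp_all
  define g where "g = vR N (k'#ks)"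
  show ?case
  proof
    fix a assume a: "a \<in> {1..N-1}"
    have ha: "1 \<le> a" "a \<le> N - 1" using a by auto
    have eo: "Uo N (vL N (k'#ks)) a = Uo N (Cs N g) a"
      using IH a unfolding g_def by (intro Uo_cong) auto
    have ec: "Uc N (vL N (k'#ks)) a = Uc N (Cs N g) a"
      using IH a unfolding g_def by (intro Uc_cong) auto
    show "vL N (k # k' # ks) a = Cs N (vR N (k # k' # ks)) a"
    proof (cases "k = 1")
      case True
      have "vL N (k # k' # ks) a = Qo N (Uc N (Cs N g)) a + Po (Uo N (Cs N g)) a"
        using True eo ec by (simp add: Qo_def Po_def)
      also have "\<dots> = Cm N (Po (Uc N g)) a" by (rule R4[OF ha])
      also have "\<dots> = Cs N (vR N (k # k' # ks)) a"
        using CsB[OF ha, of 1 "Uc N g"] True unfolding g_def by simp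
      finally show ?thesis .
    next
      case False
      then have k0: "k > 0" using 3 by simp
      have "Cs N (vR N (k # k' # ks)) a = Cm N ((Zo N ^^ (k - 1)) (Po (Uo N g))) a"
        using CsB[OF ha, of k "Uo N g"] False unfolding g_def by simp
      also have "\<dots> = Cm N (Po (Uo N g)) a / real a ^ (k - 1)" by (rule Zpow[OF ha])
      also have "\<dots> = Po (Uo N (Cs N g)) a / real a ^ (k - 1)" using R3[OF ha] by simp
      also have "\<dots> = Uo N (Cs N g) a / real a ^ k"
        using k0 ha unfolding Po_def by (cases k) (auto simp: field_simps)
      also have "\<dots> = vL N (k # k' # ks) a" using False eo by simp
      finally show ?thesis by simp
    qed
  qed
qed



definition chainS :: "nat \<Rightarrow> (nat \<Rightarrow> 'v set) \<Rightarrow> (nat \<Rightarrow> 'v \<Rightarrow> 'v \<Rightarrow> bool) \<Rightarrow> (nat \<Rightarrow> 'v \<Rightarrow> real) \<Rightarrow> 'v \<Rightarrow> real" where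
  "chainS r V R w x = (\<Sum>n \<in> {n \<in> PiE {1..r} V. n 1 = x \<and> (\<forall>i\<in>{1..r-1}. R i (n i) (n (Suc i)))}. \<Prod>i\<in>{1..r}. w i (n i))"

lemma chain_one:
  assumes "x \<in> V 1"
  shows "chainS 1 V R w x = w 1 x"
proof -
  have "{n \<in> PiE {1..1} V. n 1 = x \<and> (\<forall>i\<in>{1..1-1}. R i (n i) (n (Suc i)))} = {(\<lambda>i. if i = 1 then x else undefined)}"
    using assms by (auto simp: PiE_iff extensional_def fun_eq_iff)
  then show ?thesis unfolding chainS_def by simp
qed

lemma chain_Suc:
  assumes "1 \<le> r" "\<And>i. finite (V i)" "x \<in> V 1"
  shows "chainS (Suc r) V R w x = w 1 x * (\<Sum>y\<in>{y\<in>V 2. R 1 x y}. chainS r (\<lambda>i. V (Suc i)) (\<lambda>i. R (Suc i)) (\<lambda>i. w (Suc i)) y)"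
proof -
  define T where "T = {n \<in> PiE {1..Suc r} V. n 1 = x \<and> (\<forall>i\<in>{1..Suc r-1}. R i (n i) (n (Suc i)))}"
  define S' where "S' y = {m \<in> PiE {1..r} (\<lambda>i. V (Suc i)). m 1 = y \<and> (\<forall>i\<in>{1..r-1}. R (Suc i) (m i) (m (Suc i)))}" for y
  define Y where "Y = {y\<in>V 2. R 1 x y}"
  have finPi: "finite (PiE {1..r} (\<lambda>i. V (Suc i)))" using assms by (intro finite_PiE) auto
  have finS': "finite (S' y)" for y unfolding S'_def using finPi by auto
  have finY: "finite Y" unfolding Y_def using assms by auto
  have "w 1 x * (\<Sum>y\<in>Y. chainS r (\<lambda>i. V (Suc i)) (\<lambda>i. R (Suc i)) (\<lambda>i. w (Suc i)) y)
      = (\<Sum>y\<in>Y. \<Sum>m\<in>S' y. w 1 x * (\<Prod>i\<in>{1..r}. w (Suc i) (m i)))"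
    unfolding chainS_def S'_def by (simp add: sum_distrib_left)
  also have "\<dots> = (\<Sum>(y,m)\<in>Sigma Y S'. w 1 x * (\<Prod>i\<in>{1..r}. w (Suc i) (m i)))"
    using finY finS' by (subst sum.Sigma) auto
  also have "\<dots> = (\<Sum>n\<in>T. \<Prod>i\<in>{1..Suc r}. w i (n i))"
  proof (rule sum.reindex_bij_witness[where j = "\<lambda>(y,m) i. if i = 1 then x else if i \<in> {2..Suc r} then m (i - 1) else undefined"
        and i = "\<lambda>n. (n 2, \<lambda>i. if i \<in> {1..r} then n (Suc i) else undefined)"])
    fix p assume p: "p \<in> Sigma Y S'"
    then obtain y m where pe: "p = (y, m)" and y: "y \<in> Y" and m: "m \<in> S' y" by auto
    have mP: "m \<in> PiE {1..r} (\<lambda>i. V (Suc i))" and m1: "m 1 = y" and mR: "\<forall>i\<in>{1..r-1}. R (Suc i) (m i) (m (Suc i))"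
      using m unfolding S'_def by auto
    have mu: "\<And>i. i \<notin> {1..r} \<Longrightarrow> m i = undefined" using mP by (auto simp: PiE_iff extensional_def)
    have mV: "\<And>i. i \<in> {1..r} \<Longrightarrow> m i \<in> V (Suc i)" using mP by (auto simp: PiE_iff)
    have yV: "y \<in> V 2" "R 1 x y" using y unfolding Y_def by auto
    define n where "n = (\<lambda>i. if i = 1 then x else if i \<in> {2..Suc r} then m (i - 1) else undefined)"
    have jp: "(\<lambda>(y,m) i. if i = 1 then x else if i \<in> {2..Suc r} then m (i - 1) else undefined) p = n"
      unfolding pe n_def by simp
    show "((\<lambda>n. (n 2, \<lambda>i. if i \<in> {1..r} then n (Suc i) else undefined))
           ((\<lambda>(y,m) i. if i = 1 then x else if i \<in> {2..Suc r} then m (i - 1) else undefined) p)) = p"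
      unfolding jp using assms(1) m1 mu unfolding pe n_def by (auto simp: fun_eq_iff)
    have nP: "n \<in> PiE {1..Suc r} V"
    proof (unfold PiE_iff extensional_def, intro conjI ballI allI impI CollectI)
      fix i assume i: "i \<in> {1..Suc r}"
      show "n i \<in> V i"
      proof (cases "i = 1")
        case True then show ?thesis using m1 yV assms(1,3) by (simp add: n_def)
      next
        case False
        then have "i - 1 \<in> {1..r}" "Suc (i - 1) = i" using i by auto
        then show ?thesis using mV[of "i-1"] False i by (simp add: n_def)
      qed
    next
      fix i assume "i \<notin> {1..Suc r}" then show "n i = undefined" by (auto simp add: n_def)
    qed
    have nR: "\<forall>i\<in>{1..Suc r-1}. R i (n i) (n (Suc i))"
    proof
      fix i assume i: "i \<in> {1..Suc r - 1}"
      show "R i (n i) (n (Suc i))"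
      proof (cases "i = 1")
        case True then show ?thesis using m1 yV assms(1) by (simp add: n_def)
      next
        case False
        then have a: "i - 1 \<in> {1..r-1}" and b: "Suc (i - 1) = i" using i by auto
        have "R (Suc (i-1)) (m (i-1)) (m (Suc (i-1)))" using mR a by blast
        then have "R i (m (i-1)) (m i)" using b by simp
        then show ?thesis using False i by (auto simp add: n_def)
      qed
    qed
    show "(\<lambda>(y,m) i. if i = 1 then x else if i \<in> {2..Suc r} then m (i - 1) else undefined) p \<in> T"
      unfolding jp T_def using nP nR by (simp add: n_def)
    have "(\<Prod>i\<in>{1..Suc r}. w i (n i)) = w 1 (n 1) * (\<Prod>i\<in>{Suc 1..Suc r}. w i (n i))"
      by (rule prod.atLeast_Suc_atMost) simp
    also have "(\<Prod>i\<in>{Suc 1..Suc r}. w i (n i)) = (\<Prod>i\<in>{1..r}. w (Suc i) (n (Suc i)))"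
      by (rule prod.shift_bounds_cl_Suc_ivl)
    also have "\<dots> = (\<Prod>i\<in>{1..r}. w (Suc i) (m i))"
      by (intro prod.cong refl) (auto simp: n_def)
    finally show "(\<Prod>i\<in>{1..Suc r}. w i ((\<lambda>(y,m) i. if i = 1 then x else if i \<in> {2..Suc r} then m (i - 1) else undefined) p i))
       = (case p of (y, m) \<Rightarrow> w 1 x * (\<Prod>i\<in>{1..r}. w (Suc i) (m i)))"
      unfolding jp by (simp add: pe n_def)
  next
    fix n assume n: "n \<in> T"
    have nP: "n \<in> PiE {1..Suc r} V" and n1: "n 1 = x" and nR: "\<forall>i\<in>{1..Suc r-1}. R i (n i) (n (Suc i))"
      using n unfolding T_def by auto
    have nu: "\<And>i. i \<notin> {1..Suc r} \<Longrightarrow> n i = undefined" using nP by (auto simp: PiE_iff extensional_def)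
    have nV: "\<And>i. i \<in> {1..Suc r} \<Longrightarrow> n i \<in> V i" using nP by (auto simp: PiE_iff)
    show "(\<lambda>(y,m) i. if i = 1 then x else if i \<in> {2..Suc r} then m (i - 1) else undefined)
          ((\<lambda>n. (n 2, \<lambda>i. if i \<in> {1..r} then n (Suc i) else undefined)) n) = n"
    proof (rule ext)
      fix i show "(\<lambda>(y,m) i. if i = 1 then x else if i \<in> {2..Suc r} then m (i - 1) else undefined)
          ((\<lambda>n. (n 2, \<lambda>i. if i \<in> {1..r} then n (Suc i) else undefined)) n) i = n i"
        using n1 nu[of i] assms(1) by (cases i) auto
    qed
    have "R 1 (n 1) (n (Suc 1))" using nR assms(1) by auto
    then have "R 1 x (n 2)" using n1 by (simp add: numeral_2_eq_2)
    then have "n 2 \<in> Y" using nV[of 2] assms(1) unfolding Y_def by auto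
    moreover have "(\<lambda>i. if i \<in> {1..r} then n (Suc i) else undefined) \<in> S' (n 2)"
      unfolding S'_def using nV nR assms(1) by (auto simp: PiE_iff extensional_def numeral_2_eq_2)
    ultimately show "(\<lambda>n. (n 2, \<lambda>i. if i \<in> {1..r} then n (Suc i) else undefined)) n \<in> Sigma Y S'" by simp
  qed
  finally show ?thesis unfolding T_def Y_def chainS_def by simp
qed

lemma chain_cong:
  assumes "\<And>i a b. i \<in> {1..r-1} \<Longrightarrow> R i a b = R' i a b"
      and "\<And>i a. i \<in> {1..r} \<Longrightarrow> a \<in> V i \<Longrightarrow> w i a = w' i a"
  shows "chainS r V R w x = chainS r V R' w' x"
proof -
  have "{n \<in> PiE {1..r} V. n 1 = x \<and> (\<forall>i\<in>{1..r-1}. R i (n i) (n (Suc i)))}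
      = {n \<in> PiE {1..r} V. n 1 = x \<and> (\<forall>i\<in>{1..r-1}. R' i (n i) (n (Suc i)))}"
    using assms(1) by auto
  then show ?thesis unfolding chainS_def
    by (intro sum.cong refl prod.cong) (auto simp: assms(2) PiE_iff)
qed

lemma chain_congV:
  assumes "\<And>i. i \<in> {1..r} \<Longrightarrow> V i = V' i"
      and "\<And>i a b. i \<in> {1..r-1} \<Longrightarrow> R i a b = R' i a b"
      and "\<And>i a. i \<in> {1..r} \<Longrightarrow> a \<in> V i \<Longrightarrow> w i a = w' i a"
  shows "chainS r V R w x = chainS r V' R' w' x"
proof -
  have "PiE {1..r} V = PiE {1..r} V'" using assms(1) by (rule PiE_cong)
  then have "chainS r V R w x = chainS r V' R w x" unfolding chainS_def by simp
  also have "\<dots> = chainS r V' R' w' x" by (rule chain_cong) (use assms in auto)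
  finally show ?thesis .
qed

lemma chain_total:
  assumes "1 \<le> r" "\<And>i. finite (V i)"
  shows "(\<Sum>n \<in> {n \<in> PiE {1..r} V. \<forall>i\<in>{1..r-1}. R i (n i) (n (Suc i))}. \<Prod>i\<in>{1..r}. w i (n i))
       = (\<Sum>x\<in>V 1. chainS r V R w x)"
proof -
  define S where "S = {n \<in> PiE {1..r} V. \<forall>i\<in>{1..r-1}. R i (n i) (n (Suc i))}"
  have fS: "finite S" unfolding S_def using assms by (intro finite_subset[OF _ finite_PiE[of "{1..r}" V]]) auto
  have im: "(\<lambda>n. n 1) ` S \<subseteq> V 1" unfolding S_def using assms by (auto simp: PiE_iff)
  have "(\<Sum>x\<in>V 1. chainS r V R w x) = (\<Sum>x\<in>V 1. \<Sum>n\<in>{n. n \<in> S \<and> n 1 = x}. \<Prod>i\<in>{1..r}. w i (n i))"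
    unfolding chainS_def S_def by (intro sum.cong refl) auto
  also have "\<dots> = (\<Sum>n\<in>S. \<Prod>i\<in>{1..r}. w i (n i))"
    by (rule sum.group[OF fS _ im]) (use assms in auto)
  finally show ?thesis unfolding S_def by simp
qed



lemma kk_cons_Suc: "1 \<le> j \<Longrightarrow> kk (k#ks) (Suc j) = kk ks j"
  unfolding kk_def by (cases j) auto

lemma kk_cons_1: "kk (k#ks) 1 = k"
  unfolding kk_def by simp

lemma ones_cons: "ones_set (k#ks) = (if k = 1 then {1} else {}) \<union> Suc ` ones_set ks"
proof (rule set_eqI)
  fix i
  show "i \<in> ones_set (k#ks) \<longleftrightarrow> i \<in> (if k = 1 then {1} else {}) \<union> Suc ` ones_set ks"
  proof (cases i)
    case 0 then show ?thesis unfolding ones_set_def by auto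
  next
    case (Suc j)
    show ?thesis
    proof (cases j)
      case 0 then show ?thesis using Suc unfolding ones_set_def by (auto simp: kk_def)
    next
      case (Suc j')
      then show ?thesis using \<open>i = Suc j\<close> unfolding ones_set_def
        by (auto simp: kk_cons_Suc)
    qed
  qed
qed

lemma ones_sub: "ones_set ks \<subseteq> {1..length ks}" unfolding ones_set_def by auto

definition RA :: "nat set \<Rightarrow> nat \<Rightarrow> nat \<Rightarrow> nat \<Rightarrow> bool" where
  "RA A i a b = (if i \<in> A then a \<le> b else a < b)"
definition wA :: "nat \<Rightarrow> nat list \<Rightarrow> nat set \<Rightarrow> nat \<Rightarrow> nat \<Rightarrow> real" where
  "wA N ks A i a = (if i \<in> A then 1 / (real N - real a) else 1 / real a ^ kk ks i)"
definition LA :: "nat \<Rightarrow> nat list \<Rightarrow> nat \<Rightarrow> real" where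
  "LA N ks x = (\<Sum>A\<in>Pow (ones_set ks). chainS (length ks) (\<lambda>_. {1..N-1}) (RA A) (wA N ks A) x)"

lemma shift_cong:
  assumes "\<And>i. 1 \<le> i \<Longrightarrow> (Suc i \<in> A \<longleftrightarrow> i \<in> B)"
  shows "chainS r (\<lambda>_. {1..N-1}) (\<lambda>i. RA A (Suc i)) (\<lambda>i. wA N (k#ks) A (Suc i)) y
       = chainS r (\<lambda>_. {1..N-1}) (RA B) (wA N ks B) y"
  by (rule chain_cong) (use assms in \<open>auto simp: RA_def wA_def kk_cons_Suc\<close>)

lemma sum_Pow_Suc:
  assumes "finite Os"
  shows "(\<Sum>A\<in>Pow (Suc ` Os). F A) = (\<Sum>B\<in>Pow Os. F (Suc ` B))"
proof -
  have "Pow (Suc ` Os) = image Suc ` Pow Os" by (rule image_Pow_surj[symmetric]) simp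
  moreover have "inj_on (image Suc) (Pow Os)" by (rule inj_on_image_Pow) simp
  ultimately show ?thesis by (simp add: sum.reindex)
qed

lemma sum_Pow_ins:
  assumes "finite S" "a \<notin> S"
  shows "(\<Sum>A\<in>Pow (insert a S). F A) = (\<Sum>A\<in>Pow S. F A) + (\<Sum>A\<in>Pow S. F (insert a A))"
proof -
  have "(\<Sum>A\<in>Pow (insert a S). F A) = (\<Sum>A\<in>Pow S. F A) + (\<Sum>A\<in>insert a ` Pow S. F A)"
    unfolding Pow_insert by (rule sum.union_disjoint) (use assms in auto)
  also have "(\<Sum>A\<in>insert a ` Pow S. F A) = (\<Sum>A\<in>Pow S. F (insert a A))"
  proof (rule sum.reindex_cong[where l = "insert a"])
    show "inj_on (insert a) (Pow S)" unfolding inj_on_def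
    proof (intro ballI impI)
      fix x y assume "x \<in> Pow S" "y \<in> Pow S" "insert a x = insert a y"
      then show "x = y" using assms(2) by (metis PowD insert_ident subsetD)
    qed
  qed auto
  finally show ?thesis .
qed

lemma stepA:
  assumes "x \<in> {1..N-1}" "ks \<noteq> []" "\<And>i. 1 \<le> i \<Longrightarrow> (Suc i \<in> A \<longleftrightarrow> i \<in> B)"
  shows "chainS (length (k#ks)) (\<lambda>_. {1..N-1}) (RA A) (wA N (k#ks) A) x
       = wA N (k#ks) A 1 x * (\<Sum>y\<in>{y\<in>{1..N-1}. RA A 1 x y}. chainS (length ks) (\<lambda>_. {1..N-1}) (RA B) (wA N ks B) y)"
proof -
  have "1 \<le> length ks" using assms(2) by (cases ks) auto
  then have "chainS (Suc (length ks)) (\<lambda>_. {1..N-1}) (RA A) (wA N (k#ks) A) x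
       = wA N (k#ks) A 1 x * (\<Sum>y\<in>{y\<in>{1..N-1}. RA A 1 x y}. chainS (length ks) (\<lambda>_. {1..N-1}) (\<lambda>i. RA A (Suc i)) (\<lambda>i. wA N (k#ks) A (Suc i)) y)"
    using assms(1) by (subst chain_Suc) (auto simp: numeral_2_eq_2)
  also have "\<dots> = wA N (k#ks) A 1 x * (\<Sum>y\<in>{y\<in>{1..N-1}. RA A 1 x y}. chainS (length ks) (\<lambda>_. {1..N-1}) (RA B) (wA N ks B) y)"
    using shift_cong[OF assms(3)] by simp
  finally show ?thesis by simp
qed

lemma LA_vL:
  assumes "ks \<noteq> []" "\<forall>k\<in>set ks. k > 0" "last ks \<ge> 2"
  shows "\<forall>x\<in>{1..N-1}. LA N ks x = vL N ks x"
  using assms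
proof (induction N ks rule: vL.induct)
  case (1 N) then show ?case by simp
next
  case (2 N k)
  have "ones_set [k] = {}" using 2 unfolding ones_set_def kk_def by auto
  show ?case
  proof
    fix x assume x: "x \<in> {1..N-1}"
    have "chainS 1 (\<lambda>_. {1..N-1}) (RA {}) (wA N [k] {}) x = wA N [k] {} 1 x"
      by (rule chain_one) (use x in simp)
    then show "LA N [k] x = vL N [k] x" unfolding LA_def using \<open>ones_set [k] = {}\<close>
      by (simp add: wA_def kk_def)
  qed
next
  case (3 N k k' ks)
  define ks' where "ks' = k' # ks"
  define Os where "Os = ones_set ks'"
  define H where "H B y = chainS (length ks') (\<lambda>_. {1..N-1}) (RA B) (wA N ks' B) y" for B y
  have IH: "\<forall>y\<in>{1..N-1}. LA N ks' y = vL N ks' y" using 3 unfolding ks'_def by (cases "k = 1") auto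
  have finO: "finite Os" unfolding Os_def ones_set_def by auto
  have O1: "0 \<notin> Os" unfolding Os_def ones_set_def by auto
  have LAks: "LA N ks' y = (\<Sum>B\<in>Pow Os. H B y)" for y unfolding LA_def H_def Os_def by simp
  show ?case
  proof
    fix x assume x: "x \<in> {1..N-1}"
    have part1: "(\<Sum>B\<in>Pow Os. chainS (length (k#ks')) (\<lambda>_. {1..N-1}) (RA (Suc ` B)) (wA N (k#ks') (Suc ` B)) x)
        = Uo N (vL N ks') x / real x ^ k"
    proof -
      have "(\<Sum>B\<in>Pow Os. chainS (length (k#ks')) (\<lambda>_. {1..N-1}) (RA (Suc ` B)) (wA N (k#ks') (Suc ` B)) x)
          = (\<Sum>B\<in>Pow Os. 1 / real x ^ k * (\<Sum>y\<in>{x<..N-1}. H B y))"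
      proof (intro sum.cong refl)
        fix B assume B: "B \<in> Pow Os"
        have n1: "1 \<notin> Suc ` B" using B O1 by auto
        have ey: "{y\<in>{1..N-1}. RA (Suc ` B) 1 x y} = {x<..N-1}" using n1 x by (auto simp: RA_def)
        show "chainS (length (k#ks')) (\<lambda>_. {1..N-1}) (RA (Suc ` B)) (wA N (k#ks') (Suc ` B)) x
            = 1 / real x ^ k * (\<Sum>y\<in>{x<..N-1}. H B y)"
          unfolding H_def
          by (subst stepA[where B = B]) (use x n1 ey in \<open>auto simp: ks'_def wA_def kk_def\<close>)
      qed
      also have "\<dots> = 1 / real x ^ k * (\<Sum>y\<in>{x<..N-1}. LA N ks' y)"
        unfolding LAks by (simp add: sum_distrib_left sum.swap[of _ "Pow Os"])
      also have "\<dots> = 1 / real x ^ k * (\<Sum>y\<in>{x<..N-1}. vL N ks' y)"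
        using IH x by (intro arg_cong[where f = "\<lambda>t. 1 / real x ^ k * t"] sum.cong) auto
      finally show ?thesis unfolding Uo_def by simp
    qed
    show "LA N (k # k' # ks) x = vL N (k # k' # ks) x"
    proof (cases "k = 1")
      case False
      have "ones_set (k#ks') = Suc ` Os" unfolding Os_def using False by (simp add: ones_cons)
      then have "LA N (k # k' # ks) x = (\<Sum>B\<in>Pow Os. chainS (length (k#ks')) (\<lambda>_. {1..N-1}) (RA (Suc ` B)) (wA N (k#ks') (Suc ` B)) x)"
        unfolding LA_def ks'_def[symmetric] using finO by (simp add: sum_Pow_Suc)
      then show ?thesis using part1 False unfolding ks'_def by simp
    next
      case True
      have on: "ones_set (k#ks') = insert 1 (Suc ` Os)" unfolding Os_def using True by (simp add: ones_cons)
      have n1: "1 \<notin> Suc ` Os" using O1 by auto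
      have part2: "(\<Sum>B\<in>Pow Os. chainS (length (k#ks')) (\<lambda>_. {1..N-1}) (RA (insert 1 (Suc ` B))) (wA N (k#ks') (insert 1 (Suc ` B))) x)
        = Qo N (Uc N (vL N ks')) x"
      proof -
        have "(\<Sum>B\<in>Pow Os. chainS (length (k#ks')) (\<lambda>_. {1..N-1}) (RA (insert 1 (Suc ` B))) (wA N (k#ks') (insert 1 (Suc ` B))) x)
            = (\<Sum>B\<in>Pow Os. 1 / (real N - real x) * (\<Sum>y\<in>{x..N-1}. H B y))"
        proof (intro sum.cong refl)
          fix B assume B: "B \<in> Pow Os"
          have ey: "{y\<in>{1..N-1}. RA (insert 1 (Suc ` B)) 1 x y} = {x..N-1}" using x by (auto simp: RA_def)
          show "chainS (length (k#ks')) (\<lambda>_. {1..N-1}) (RA (insert 1 (Suc ` B))) (wA N (k#ks') (insert 1 (Suc ` B))) x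
              = 1 / (real N - real x) * (\<Sum>y\<in>{x..N-1}. H B y)"
            unfolding H_def
            by (subst stepA[where B = B]) (use x ey in \<open>auto simp: ks'_def wA_def\<close>)
        qed
        also have "\<dots> = 1 / (real N - real x) * (\<Sum>y\<in>{x..N-1}. LA N ks' y)"
          unfolding LAks by (simp add: sum_distrib_left sum.swap[of _ "Pow Os"])
        also have "\<dots> = 1 / (real N - real x) * (\<Sum>y\<in>{x..N-1}. vL N ks' y)"
          using IH x by (intro arg_cong[where f = "\<lambda>t. 1 / (real N - real x) * t"] sum.cong) auto
        finally show ?thesis unfolding Uc_def Qo_def by simp
      qed
      have "LA N (k # k' # ks) x = (\<Sum>A\<in>Pow (Suc ` Os). chainS (length (k#ks')) (\<lambda>_. {1..N-1}) (RA A) (wA N (k#ks') A) x)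
          + (\<Sum>A\<in>Pow (Suc ` Os). chainS (length (k#ks')) (\<lambda>_. {1..N-1}) (RA (insert 1 A)) (wA N (k#ks') (insert 1 A)) x)"
        unfolding LA_def ks'_def[symmetric] on using finO n1 by (subst sum_Pow_ins) auto
      also have "\<dots> = Uo N (vL N ks') x / real x ^ k + Qo N (Uc N (vL N ks')) x"
        using finO part1 part2 by (simp add: sum_Pow_Suc)
      finally show ?thesis using True unfolding ks'_def by (simp add: Po_def)
    qed
  qed
qed

lemma zeta_LA:
  assumes "admissible ks"
  shows "zeta_diamond N ks = (\<Sum>x\<in>{1..N-1}. LA N ks x)"
proof -
  define r where "r = length ks"
  have ne: "ks \<noteq> []" and lst: "last ks \<ge> 2" using assms unfolding admissible_def by auto
  have r1: "1 \<le> r" using ne unfolding r_def by (cases ks) auto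
  have kr: "kk ks r = last ks" unfolding kk_def r_def using ne by (simp add: last_conv_nth)
  have Asub: "A \<subseteq> {1..r-1}" if "A \<in> Pow (ones_set ks)" for A
  proof
    fix i assume "i \<in> A"
    then have "i \<in> ones_set ks" using that by auto
    then have "i \<in> {1..r}" "kk ks i = 1" unfolding ones_set_def r_def by auto
    moreover have "i \<noteq> r" using calculation kr lst by auto
    ultimately show "i \<in> {1..r-1}" by auto
  qed
  have inner: "(\<Sum>n\<in>S_set r N A. (\<Prod>i\<in>A. 1 / (real N - real (n i))) * (\<Prod>i\<in>{1..r} - A. 1 / real (n i) ^ kk ks i))
      = (\<Sum>x\<in>{1..N-1}. chainS r (\<lambda>_. {1..N-1}) (RA A) (wA N ks A) x)" if A: "A \<in> Pow (ones_set ks)" for A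
  proof -
    have As: "A \<subseteq> {1..r-1}" using Asub[OF A] .
    have "S_set r N A = {n \<in> PiE {1..r} (\<lambda>_. {1..N-1}). \<forall>i\<in>{1..r-1}. RA A i (n i) (n (Suc i))}"
      unfolding S_set_def RA_def using As by auto
    moreover have "(\<Prod>i\<in>A. 1 / (real N - real (n i))) * (\<Prod>i\<in>{1..r} - A. 1 / real (n i) ^ kk ks i)
        = (\<Prod>i\<in>{1..r}. wA N ks A i (n i))" for n
    proof -
      have "(\<Prod>i\<in>{1..r}. wA N ks A i (n i)) = (\<Prod>i\<in>{1..r} \<inter> A. 1 / (real N - real (n i))) * (\<Prod>i\<in>{1..r} - A. 1 / real (n i) ^ kk ks i)"
        unfolding wA_def by (subst prod.If_cases) (simp_all add: Diff_eq)
      moreover have "{1..r} \<inter> A = A" using As by (auto simp: subset_iff)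
      ultimately show ?thesis by simp
    qed
    ultimately show ?thesis using chain_total[OF r1, where V="\<lambda>_. {1..N-1}" and R="RA A" and w="wA N ks A"] by simp
  qed
  have "zeta_diamond N ks = (\<Sum>A\<in>Pow (ones_set ks). \<Sum>x\<in>{1..N-1}. chainS r (\<lambda>_. {1..N-1}) (RA A) (wA N ks A) x)"
    unfolding zeta_diamond_def Let_def r_def[symmetric] using inner by (intro sum.cong refl) auto
  also have "\<dots> = (\<Sum>x\<in>{1..N-1}. LA N ks x)"
    unfolding LA_def r_def by (rule sum.swap)
  finally show ?thesis .
qed



definition Blk :: "nat \<Rightarrow> nat \<Rightarrow> (nat \<Rightarrow> nat) set" where
  "Blk N k = {b \<in> PiE {1..k} (\<lambda>_. {1..N-1}). \<forall>j\<in>{1..<k}. b j \<le> b (Suc j)}"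

definition wB :: "nat \<Rightarrow> nat \<Rightarrow> (nat \<Rightarrow> nat) \<Rightarrow> real" where
  "wB N k b = 1 / ((real N - real (b 1)) * (\<Prod>j\<in>{2..k}. real (b j)))"

definition wD :: "nat \<Rightarrow> (nat \<Rightarrow> real) \<Rightarrow> nat \<Rightarrow> nat \<Rightarrow> real" where
  "wD k g j a = 1 / real a * (if j = k then g a else 1)"

lemma Dk:
  assumes "1 \<le> k" "x \<in> {1..N-1}"
  shows "chainS k (\<lambda>_. {1..N-1}) (\<lambda>_ a b. a \<le> b) (wD k g) x = (Zo N ^^ (k - 1)) (Po g) x"
  using assms
proof (induction k arbitrary: x rule: dec_induct)
  case base
  have "chainS 1 (\<lambda>_. {1..N-1}) (\<lambda>_ a b. a \<le> b) (wD 1 g) x = wD 1 g 1 x"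
    by (rule chain_one) (use base in auto)
  also have "wD 1 g 1 x = Po g x" by (simp add: wD_def Po_def)
  finally show ?case by simp
next
  case (step k)
  have "chainS (Suc k) (\<lambda>_. {1..N-1}) (\<lambda>_ a b. a \<le> b) (wD (Suc k) g) x
      = wD (Suc k) g 1 x * (\<Sum>y\<in>{y\<in>{1..N-1}. x \<le> y}. chainS k (\<lambda>_. {1..N-1}) (\<lambda>_ a b. a \<le> b) (\<lambda>i. wD (Suc k) g (Suc i)) y)"
    using step by (subst chain_Suc) auto
  also have "(\<lambda>i. wD (Suc k) g (Suc i)) = wD k g" by (auto simp: wD_def fun_eq_iff)
  also have "{y\<in>{1..N-1}. x \<le> y} = {x..N-1}" using step by auto
  also have "wD (Suc k) g 1 x = 1 / real x" using step by (simp add: wD_def)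
  also have "(\<Sum>y\<in>{x..N-1}. chainS k (\<lambda>_. {1..N-1}) (\<lambda>_ a b. a \<le> b) (wD k g) y)
      = (\<Sum>y\<in>{x..N-1}. (Zo N ^^ (k - 1)) (Po g) y)"
    using step by (intro sum.cong refl) auto
  finally have e: "chainS (Suc k) (\<lambda>_. {1..N-1}) (\<lambda>_ a b. a \<le> b) (wD (Suc k) g) x
     = 1 / real x * (\<Sum>y\<in>{x..N-1}. (Zo N ^^ (k - 1)) (Po g) y)" .
  have "(Zo N ^^ (Suc k - 1)) (Po g) x = (Zo N ^^ Suc (k - 1)) (Po g) x" using step by simp
  also have "\<dots> = Zo N ((Zo N ^^ (k - 1)) (Po g)) x" by simp
  also have "\<dots> = 1 / real x * (\<Sum>y\<in>{x..N-1}. (Zo N ^^ (k - 1)) (Po g) y)"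
    unfolding Zo_def Po_def Uc_def by simp
  finally show ?case using e by simp
qed

lemma BlkSum:
  assumes "1 \<le> k" "x \<in> {1..N-1}"
  shows "(\<Sum>b\<in>{b\<in>Blk N k. b 1 = x}. wB N k b * g (b k)) = Bop N k g x"
proof -
  have "(\<Sum>b\<in>{b\<in>Blk N k. b 1 = x}. wB N k b * g (b k))
      = (\<Sum>b\<in>{b\<in>Blk N k. b 1 = x}. real x / (real N - real x) * (\<Prod>j\<in>{1..k}. wD k g j (b j)))"
  proof (intro sum.cong refl)
    fix b assume b: "b \<in> {b\<in>Blk N k. b 1 = x}"
    then have b1: "b 1 = x" and bP: "b \<in> PiE {1..k} (\<lambda>_. {1..N-1})" unfolding Blk_def by auto
    have xp: "real x > 0" using assms by auto
    have "(\<Prod>j\<in>{1..k}. wD k g j (b j)) = (\<Prod>j\<in>{1..k}. 1 / real (b j)) * (\<Prod>j\<in>{1..k}. if j = k then g (b j) else 1)"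
      unfolding wD_def by (rule prod.distrib)
    also have "(\<Prod>j\<in>{1..k}. if j = k then g (b j) else 1) = g (b k)"
      using assms by (subst prod.delta) auto
    also have "(\<Prod>j\<in>{1..k}. 1 / real (b j)) = 1 / real (b 1) * (\<Prod>j\<in>{Suc 1..k}. 1 / real (b j))"
      using assms by (intro prod.atLeast_Suc_atMost) auto
    also have "(\<Prod>j\<in>{Suc 1..k}. 1 / real (b j)) = 1 / (\<Prod>j\<in>{2..k}. real (b j))"
      by (simp add: prod_dividef numeral_2_eq_2)
    finally show "wB N k b * g (b k) = real x / (real N - real x) * (\<Prod>j\<in>{1..k}. wD k g j (b j))"
      unfolding wB_def b1 using xp by simp
  qed
  also have "\<dots> = real x / (real N - real x) * chainS k (\<lambda>_. {1..N-1}) (\<lambda>_ a b. a \<le> b) (wD k g) x"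
  proof -
    have "{b\<in>Blk N k. b 1 = x} = {n \<in> PiE {1..k} (\<lambda>_. {1..N-1}). n 1 = x \<and> (\<forall>i\<in>{1..k-1}. n i \<le> n (Suc i))}"
      unfolding Blk_def using assms by auto
    then show ?thesis unfolding chainS_def by (simp add: sum_distrib_left)
  qed
  also have "\<dots> = Bop N k g x" unfolding Bop_def using Dk[OF assms] by simp
  finally show ?thesis .
qed

definition VB :: "nat \<Rightarrow> nat list \<Rightarrow> nat \<Rightarrow> (nat \<Rightarrow> nat) set" where
  "VB N ks i = Blk N (kk ks i)"
definition RB :: "nat list \<Rightarrow> nat \<Rightarrow> (nat \<Rightarrow> nat) \<Rightarrow> (nat \<Rightarrow> nat) \<Rightarrow> bool" where
  "RB ks i b b' = (if i \<in> ones_set ks then b (kk ks i) \<le> b' 1 else b (kk ks i) < b' 1)"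
definition WB :: "nat \<Rightarrow> nat list \<Rightarrow> nat \<Rightarrow> (nat \<Rightarrow> nat) \<Rightarrow> real" where
  "WB N ks i b = wB N (kk ks i) b"

lemma finite_Blk: "finite (Blk N k)"
  unfolding Blk_def by (rule finite_subset[OF _ finite_PiE[of "{1..k}" "\<lambda>_. {1..N-1}"]]) auto

lemma Blk_group:
  assumes "1 \<le> k"
  shows "(\<Sum>b\<in>{b\<in>Blk N k. P (b 1)}. C b) = (\<Sum>y\<in>{y\<in>{1..N-1}. P y}. \<Sum>b\<in>{b\<in>Blk N k. b 1 = y}. C b)"
proof -
  have im: "(\<lambda>b. b 1) ` {b\<in>Blk N k. P (b 1)} \<subseteq> {y\<in>{1..N-1}. P y}"
    using assms unfolding Blk_def by (auto simp: PiE_iff)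
  have "(\<Sum>y\<in>{y\<in>{1..N-1}. P y}. \<Sum>b\<in>{x. x \<in> {b\<in>Blk N k. P (b 1)} \<and> x 1 = y}. C b) = (\<Sum>b\<in>{b\<in>Blk N k. P (b 1)}. C b)"
    by (rule sum.group[OF _ _ im]) (use finite_Blk in auto)
  moreover have "(\<Sum>y\<in>{y\<in>{1..N-1}. P y}. \<Sum>b\<in>{x. x \<in> {b\<in>Blk N k. P (b 1)} \<and> x 1 = y}. C b)
      = (\<Sum>y\<in>{y\<in>{1..N-1}. P y}. \<Sum>b\<in>{b\<in>Blk N k. b 1 = y}. C b)"
    by (intro sum.cong refl) auto
  ultimately show ?thesis by simp
qed

lemma CB:
  assumes "ks \<noteq> []" "\<forall>k\<in>set ks. k > 0"
  shows "\<forall>x\<in>{1..N-1}. (\<Sum>b\<in>{b\<in>VB N ks 1. b 1 = x}. chainS (length ks) (VB N ks) (RB ks) (WB N ks) b) = vR N ks x"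
  using assms
proof (induction N ks rule: vR.induct)
  case (1 N) then show ?case by simp
next
  case (2 N k)
  show ?case
  proof
    fix x assume x: "x \<in> {1..N-1}"
    have k1: "1 \<le> k" using 2 by simp
    have "(\<Sum>b\<in>{b\<in>VB N [k] 1. b 1 = x}. chainS 1 (VB N [k]) (RB [k]) (WB N [k]) b)
        = (\<Sum>b\<in>{b\<in>Blk N k. b 1 = x}. wB N k b * (\<lambda>_. 1) (b k))"
    proof (intro sum.cong)
      show "{b\<in>VB N [k] 1. b 1 = x} = {b\<in>Blk N k. b 1 = x}" by (simp add: VB_def kk_def)
      fix b assume b: "b \<in> {b\<in>Blk N k. b 1 = x}"
      have "chainS 1 (VB N [k]) (RB [k]) (WB N [k]) b = WB N [k] 1 b"
        by (rule chain_one) (use b in \<open>simp add: VB_def kk_def\<close>)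
      then show "chainS 1 (VB N [k]) (RB [k]) (WB N [k]) b = wB N k b * (\<lambda>_. 1) (b k)"
        by (simp add: WB_def kk_def)
    qed
    also have "\<dots> = vR N [k] x" using BlkSum[OF k1 x, of "\<lambda>_. 1"] by simp
    finally show "(\<Sum>b\<in>{b\<in>VB N [k] 1. b 1 = x}. chainS (length [k]) (VB N [k]) (RB [k]) (WB N [k]) b) = vR N [k] x"
      by simp
  qed
next
  case (3 N k k' ks)
  define ks' where "ks' = k' # ks"
  have IH: "\<forall>y\<in>{1..N-1}. (\<Sum>b\<in>{b\<in>VB N ks' 1. b 1 = y}. chainS (length ks') (VB N ks') (RB ks') (WB N ks') b) = vR N ks' y"
    using 3 unfolding ks'_def by (cases "k = 1") simp_all
  have k1: "1 \<le> k" and k'1: "1 \<le> k'" using 3 by auto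
  define G where "G = (if k = 1 then Uc N (vR N ks') else Uo N (vR N ks'))"
  define rel where "rel c y = (if k = 1 then c \<le> y else c < y)" for c y :: nat
  have len: "1 \<le> length ks'" unfolding ks'_def by simp
  have fin: "\<And>i. finite (VB N (k#ks') i)" unfolding VB_def by (rule finite_Blk)
  have chainb: "chainS (length (k#ks')) (VB N (k#ks')) (RB (k#ks')) (WB N (k#ks')) b = wB N k b * G (b k)"
    if b: "b \<in> Blk N k" for b
  proof -
    have bk: "b k \<in> {1..N-1}" using b k1 unfolding Blk_def by (auto simp: PiE_iff)
    have "chainS (Suc (length ks')) (VB N (k#ks')) (RB (k#ks')) (WB N (k#ks')) b
        = WB N (k#ks') 1 b * (\<Sum>b'\<in>{b'\<in>VB N (k#ks') 2. RB (k#ks') 1 b b'}.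
             chainS (length ks') (\<lambda>i. VB N (k#ks') (Suc i)) (\<lambda>i. RB (k#ks') (Suc i)) (\<lambda>i. WB N (k#ks') (Suc i)) b')"
      by (rule chain_Suc[OF len fin]) (use b in \<open>simp add: VB_def kk_def\<close>)
    also have "WB N (k#ks') 1 b = wB N k b" by (simp add: WB_def kk_def)
    also have "{b'\<in>VB N (k#ks') 2. RB (k#ks') 1 b b'} = {b'\<in>Blk N k'. rel (b k) (b' 1)}"
      by (auto simp: VB_def RB_def kk_def rel_def ks'_def ones_cons numeral_2_eq_2)
    also have "(\<Sum>b'\<in>{b'\<in>Blk N k'. rel (b k) (b' 1)}.
             chainS (length ks') (\<lambda>i. VB N (k#ks') (Suc i)) (\<lambda>i. RB (k#ks') (Suc i)) (\<lambda>i. WB N (k#ks') (Suc i)) b')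
        = (\<Sum>b'\<in>{b'\<in>Blk N k'. rel (b k) (b' 1)}. chainS (length ks') (VB N ks') (RB ks') (WB N ks') b')"
    proof (intro sum.cong refl chain_congV)
      fix i assume i: "i \<in> {1..length ks'}"
      then show "VB N (k#ks') (Suc i) = VB N ks' i" by (simp add: VB_def kk_cons_Suc)
    next
      fix i a b assume i: "i \<in> {1..length ks' - 1}"
      then show "RB (k#ks') (Suc i) a b = RB ks' i a b"
        by (auto simp: RB_def kk_cons_Suc ones_cons)
    next
      fix i a assume i: "i \<in> {1..length ks'}"
      then show "WB N (k#ks') (Suc i) a = WB N ks' i a" by (simp add: WB_def kk_cons_Suc)
    qed
    also have "\<dots> = (\<Sum>y\<in>{y\<in>{1..N-1}. rel (b k) y}. \<Sum>b'\<in>{b'\<in>Blk N k'. b' 1 = y}. chainS (length ks') (VB N ks') (RB ks') (WB N ks') b')"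
      by (rule Blk_group[OF k'1])
    also have "\<dots> = (\<Sum>y\<in>{y\<in>{1..N-1}. rel (b k) y}. vR N ks' y)"
      using IH by (intro sum.cong refl) (auto simp: VB_def ks'_def kk_def)
    also have "\<dots> = G (b k)"
    proof (cases "k = 1")
      case True
      have "{y\<in>{1..N-1}. rel (b k) y} = {b k..N-1}" using bk True by (auto simp: rel_def)
      then show ?thesis using True by (simp add: G_def Uc_def)
    next
      case False
      have "{y\<in>{1..N-1}. rel (b k) y} = {b k<..N-1}" using bk False by (auto simp: rel_def)
      then show ?thesis using False by (simp add: G_def Uo_def)
    qed
    finally show ?thesis by simp
  qed
  show ?case
  proof
    fix x assume x: "x \<in> {1..N-1}"
    have "(\<Sum>b\<in>{b\<in>VB N (k#ks') 1. b 1 = x}. chainS (length (k#ks')) (VB N (k#ks')) (RB (k#ks')) (WB N (k#ks')) b)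
        = (\<Sum>b\<in>{b\<in>Blk N k. b 1 = x}. wB N k b * G (b k))"
      using chainb by (intro sum.cong) (auto simp: VB_def kk_def)
    also have "\<dots> = Bop N k G x" by (rule BlkSum[OF k1 x])
    also have "\<dots> = vR N (k # k' # ks) x" unfolding G_def ks'_def by simp
    finally show "(\<Sum>b\<in>{b\<in>VB N (k # k' # ks) 1. b 1 = x}. chainS (length (k # k' # ks)) (VB N (k # k' # ks)) (RB (k # k' # ks)) (WB N (k # k' # ks)) b) = vR N (k # k' # ks) x"
      unfolding ks'_def .
  qed
qed

lemma T_link:
  assumes "admissible ks"
  shows "(\<Sum>n\<in>T_set N ks. \<Prod>i\<in>{1..length ks}. 1 / ((real N - real (n (i, 1))) * (\<Prod>j\<in>{2..kk ks i}. real (n (i, j)))))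
       = (\<Sum>t\<in>{t \<in> PiE {1..length ks} (VB N ks). \<forall>i\<in>{1..length ks - 1}. RB ks i (t i) (t (Suc i))}. \<Prod>i\<in>{1..length ks}. WB N ks i (t i))"
proof -
  define r where "r = length ks"
  have ne: "ks \<noteq> []" and pos: "\<forall>x\<in>set ks. x > 0" and lst: "last ks \<ge> 2" using assms unfolding admissible_def by auto
  have K1: "1 \<le> kk ks i" if "i \<in> {1..r}" for i
  proof -
    have "i - 1 < length ks" using that unfolding r_def by auto
    then have "ks ! (i - 1) \<in> set ks" by simp
    then show ?thesis using pos unfolding kk_def by auto
  qed
  have kr: "kk ks r = last ks" unfolding kk_def r_def using ne by (simp add: last_conv_nth)
  have onesr: "ones_set ks \<subseteq> {1..r-1}"
  proof
    fix i assume "i \<in> ones_set ks"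
    then have "i \<in> {1..r}" "kk ks i = 1" unfolding ones_set_def r_def by auto
    moreover have "i \<noteq> r" using calculation kr lst by auto
    ultimately show "i \<in> {1..r-1}" by auto
  qed
  define Sg where "Sg = (SIGMA i:{1..r}. {1..kk ks i})"
  define T where "T = {t \<in> PiE {1..r} (VB N ks). \<forall>i\<in>{1..r - 1}. RB ks i (t i) (t (Suc i))}"
  define cur where "cur n = (\<lambda>i. if i \<in> {1..r} then (\<lambda>j. if j \<in> {1..kk ks i} then n (i, j) else undefined) else undefined)" for n :: "nat \<times> nat \<Rightarrow> nat"
  define unc where "unc t = (\<lambda>p. if p \<in> Sg then t (fst p) (snd p) else undefined)" for t :: "nat \<Rightarrow> nat \<Rightarrow> nat"
  have TS: "T_set N ks = {n \<in> PiE Sg (\<lambda>_. {1..N-1}).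
       (\<forall>i\<in>{1..r}. \<forall>j\<in>{1..<kk ks i}. n (i, j) \<le> n (i, j+1)) \<and>
       (\<forall>i\<in>ones_set ks. n (i, kk ks i) \<le> n (i+1, 1)) \<and>
       (\<forall>i\<in>{1..r-1} - ones_set ks. n (i, kk ks i) < n (i+1, 1))}"
    unfolding T_set_def Let_def Sg_def r_def by simp
  have "(\<Sum>n\<in>T_set N ks. \<Prod>i\<in>{1..r}. 1 / ((real N - real (n (i, 1))) * (\<Prod>j\<in>{2..kk ks i}. real (n (i, j)))))
      = (\<Sum>t\<in>T. \<Prod>i\<in>{1..r}. WB N ks i (t i))"
  proof (rule sum.reindex_bij_witness[where j = cur and i = unc])
    fix n assume n: "n \<in> T_set N ks"
    then have nP: "n \<in> PiE Sg (\<lambda>_. {1..N-1})"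
      and nB: "\<forall>i\<in>{1..r}. \<forall>j\<in>{1..<kk ks i}. n (i, j) \<le> n (i, j+1)"
      and nO: "\<forall>i\<in>ones_set ks. n (i, kk ks i) \<le> n (i+1, 1)"
      and nN: "\<forall>i\<in>{1..r-1} - ones_set ks. n (i, kk ks i) < n (i+1, 1)"
      unfolding TS by auto
    have nu: "\<And>p. p \<notin> Sg \<Longrightarrow> n p = undefined" using nP by (auto simp: PiE_iff extensional_def)
    have nV: "\<And>p. p \<in> Sg \<Longrightarrow> n p \<in> {1..N-1}" using nP by (auto simp: PiE_iff)
    show "unc (cur n) = n"
    proof (rule ext)
      fix p show "unc (cur n) p = n p"
        using nu[of p] by (cases p) (auto simp: unc_def cur_def Sg_def)
    qed
    have curB: "cur n i \<in> VB N ks i" if i: "i \<in> {1..r}" for i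
      unfolding VB_def Blk_def
    proof (intro CollectI conjI)
      show "cur n i \<in> PiE {1..kk ks i} (\<lambda>_. {1..N-1})"
        using i nV by (auto simp: PiE_iff extensional_def cur_def Sg_def)
      show "\<forall>j\<in>{1..<kk ks i}. cur n i j \<le> cur n i (Suc j)"
        using i nB by (auto simp: cur_def)
    qed
    have curR: "RB ks i (cur n i) (cur n (Suc i))" if i: "i \<in> {1..r-1}" for i
    proof -
      have i1: "i \<in> {1..r}" "Suc i \<in> {1..r}" using i by auto
      have c1: "cur n i (kk ks i) = n (i, kk ks i)" using i1 K1[OF i1(1)] by (simp add: cur_def)
      have c2: "cur n (Suc i) 1 = n (Suc i, 1)" using i1 K1[OF i1(2)] by (simp add: cur_def)
      show ?thesis unfolding RB_def c1 c2 using nO nN i by auto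
    qed
    show "cur n \<in> T" unfolding T_def
      using curB curR by (auto simp: PiE_iff extensional_def cur_def)
    show "(\<Prod>i\<in>{1..r}. WB N ks i (cur n i)) = (\<Prod>i\<in>{1..r}. 1 / ((real N - real (n (i, 1))) * (\<Prod>j\<in>{2..kk ks i}. real (n (i, j)))))"
    proof (rule prod.cong[OF refl])
      fix i assume i: "i \<in> {1..r}"
      have "cur n i 1 = n (i, 1)" using i K1[OF i] by (simp add: cur_def)
      moreover have "(\<Prod>j\<in>{2..kk ks i}. real (cur n i j)) = (\<Prod>j\<in>{2..kk ks i}. real (n (i, j)))"
        using i by (intro prod.cong refl) (auto simp: cur_def)
      ultimately show "WB N ks i (cur n i) = 1 / ((real N - real (n (i, 1))) * (\<Prod>j\<in>{2..kk ks i}. real (n (i, j))))"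
        by (simp add: WB_def wB_def)
    qed
  next
    fix t assume t: "t \<in> T"
    then have tP: "t \<in> PiE {1..r} (VB N ks)" and tR: "\<forall>i\<in>{1..r - 1}. RB ks i (t i) (t (Suc i))"
      unfolding T_def by auto
    have tu: "\<And>i. i \<notin> {1..r} \<Longrightarrow> t i = undefined" using tP by (auto simp: PiE_iff extensional_def)
    have tB: "\<And>i. i \<in> {1..r} \<Longrightarrow> t i \<in> Blk N (kk ks i)" using tP by (auto simp: PiE_iff VB_def)
    have tiu: "\<And>i j. i \<in> {1..r} \<Longrightarrow> j \<notin> {1..kk ks i} \<Longrightarrow> t i j = undefined"
      using tB unfolding Blk_def by (auto simp: PiE_iff extensional_def)
    have tiV: "\<And>i j. i \<in> {1..r} \<Longrightarrow> j \<in> {1..kk ks i} \<Longrightarrow> t i j \<in> {1..N-1}"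
      using tB unfolding Blk_def by (auto simp: PiE_iff)
    have tiC: "\<And>i j. i \<in> {1..r} \<Longrightarrow> j \<in> {1..<kk ks i} \<Longrightarrow> t i j \<le> t i (Suc j)"
      using tB unfolding Blk_def by auto
    show "cur (unc t) = t"
    proof (rule ext)
      fix i show "cur (unc t) i = t i"
      proof (cases "i \<in> {1..r}")
        case True
        show ?thesis
        proof (rule ext)
          fix j show "cur (unc t) i j = t i j"
            using True tiu[OF True, of j] by (auto simp: cur_def unc_def Sg_def)
        qed
      next
        case False then show ?thesis using tu[OF False] False by (auto simp add: cur_def)
      qed
    qed
    have u: "unc t (i, j) = t i j" if "i \<in> {1..r}" "j \<in> {1..kk ks i}" for i j
      using that by (simp add: unc_def Sg_def)
    show "unc t \<in> T_set N ks" unfolding TS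
    proof (intro CollectI conjI ballI)
      show "unc t \<in> PiE Sg (\<lambda>_. {1..N-1})"
        using tiV by (auto simp: PiE_iff extensional_def unc_def Sg_def)
    next
      fix i j assume i: "i \<in> {1..r}" and j: "j \<in> {1..<kk ks i}"
      then show "unc t (i, j) \<le> unc t (i, j+1)" using tiC[OF i j] u by auto
    next
      fix i assume i: "i \<in> ones_set ks"
      then have i': "i \<in> {1..r-1}" using onesr by auto
      then have i1: "i \<in> {1..r}" "Suc i \<in> {1..r}" by auto
      have "RB ks i (t i) (t (Suc i))" using tR i' by auto
      then have "t i (kk ks i) \<le> t (Suc i) 1" using i by (simp add: RB_def)
      then show "unc t (i, kk ks i) \<le> unc t (i+1, 1)"
        using u[OF i1(1), of "kk ks i"] u[OF i1(2), of 1] K1[OF i1(1)] K1[OF i1(2)] by simp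
    next
      fix i assume i: "i \<in> {1..r-1} - ones_set ks"
      then have i1: "i \<in> {1..r}" "Suc i \<in> {1..r}" by auto
      have "RB ks i (t i) (t (Suc i))" using tR i by auto
      then have "t i (kk ks i) < t (Suc i) 1" using i by (simp add: RB_def)
      then show "unc t (i, kk ks i) < unc t (i+1, 1)"
        using u[OF i1(1), of "kk ks i"] u[OF i1(2), of 1] K1[OF i1(1)] K1[OF i1(2)] by simp
    qed
  qed
  then show ?thesis unfolding T_def r_def by simp
qed



theorem mainTheorem13:
  fixes N :: nat and ks :: "nat list"
  assumes "N > 0" and "admissible ks"
  shows "zeta_diamond N ks =
    (\<Sum>n\<in>T_set N ks. \<Prod>i\<in>{1..length ks}.
        1 / ((real N - real (n (i, 1))) * (\<Prod>j\<in>{2..kk ks i}. real (n (i, j)))))"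
proof -
  have ne: "ks \<noteq> []" and pos: "\<forall>x\<in>set ks. x > 0" and lst: "last ks \<ge> 2"
    using assms(2) unfolding admissible_def by auto
  have r1: "1 \<le> length ks" using ne by (cases ks) auto
  have k1: "1 \<le> kk ks 1" using ne pos unfolding kk_def by (cases ks) auto
  have "zeta_diamond N ks = (\<Sum>x\<in>{1..N-1}. LA N ks x)" by (rule zeta_LA[OF assms(2)])
  also have "\<dots> = (\<Sum>x\<in>{1..N-1}. vL N ks x)"
    using LA_vL[OF ne pos lst] by (intro sum.cong refl) auto
  also have "\<dots> = (\<Sum>x\<in>{1..N-1}. Cs N (vR N ks) x)"
    using conn[OF pos ne] by (intro sum.cong refl) auto
  also have "\<dots> = (\<Sum>x\<in>{1..N-1}. vR N ks x)" by (rule Cs_total)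
  also have "\<dots> = (\<Sum>x\<in>{y\<in>{1..N-1}. True}. \<Sum>b\<in>{b\<in>Blk N (kk ks 1). b 1 = x}. chainS (length ks) (VB N ks) (RB ks) (WB N ks) b)"
    using CB[OF ne pos] by (intro sum.cong) (auto simp: VB_def)
  also have "\<dots> = (\<Sum>b\<in>{b\<in>Blk N (kk ks 1). True}. chainS (length ks) (VB N ks) (RB ks) (WB N ks) b)"
    by (rule Blk_group[OF k1, symmetric])
  also have "\<dots> = (\<Sum>b\<in>VB N ks 1. chainS (length ks) (VB N ks) (RB ks) (WB N ks) b)"
    by (simp add: VB_def)
  also have "\<dots> = (\<Sum>t\<in>{t \<in> PiE {1..length ks} (VB N ks). \<forall>i\<in>{1..length ks - 1}. RB ks i (t i) (t (Suc i))}. \<Prod>i\<in>{1..length ks}. WB N ks i (t i))"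
    by (rule chain_total[OF r1, symmetric]) (simp add: VB_def finite_Blk)
  also have "\<dots> = (\<Sum>n\<in>T_set N ks. \<Prod>i\<in>{1..length ks}. 1 / ((real N - real (n (i, 1))) * (\<Prod>j\<in>{2..kk ks i}. real (n (i, j)))))"
    by (rule T_link[OF assms(2), symmetric])
  finally show ?thesis .
qed

end
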